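(* Let $C$ be a bounded closed convex subset of a Hilbert space $H$ and let $T : C \rightarrow C$ be a $(b,k)$-enriched strictly pseudocontractive mapping for some $0 \leq k < 1$. Then $\mathrm{Fix}(T) \neq \emptyset$ and, for any given $x_0 \in C$ and any control sequence $\{\alpha_n\}$ of real numbers such that $k < \alpha_n < 1$ for all $n$ and $$\sum_{n=0}^{\infty} (\alpha_n - k)(1 - \alpha_n) = \infty,$$ the Krasnoselskij-Mann iteration $\{x_n\}_{n=0}^\infty$ given by $$x_{n+1} = (1 - \lambda\alpha_n)x_n + \lambda\alpha_n T x_n, \quad n \geq 0,$$ for some $\lambda \in (0,1)$, converges weakly to a fixed point of $T$.
   Context: For a mapping $T : C \to C$, $C \subseteq H$, $\mathrm{Fix}(T) = \{x \in C : Tx = x\}$. A mapping $T : C \to C$ is called $(b,k)$-enriched strictly pseudocontractive if there exist $b \in [0,\infty)$ and $k < 1$ such that for all $x, y \in C$, $$\|b(x - y) + Tx - Ty\|^2 \leq (b + 1)^2\|x - y\|^2 + k\|x - y - (Tx - Ty)\|^2.$$ *)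

theory Defs
  imports "HOL-Analysis.Analysis"
begin

definition Fix :: "'a set \<Rightarrow> ('a \<Rightarrow> 'a) \<Rightarrow> 'a set" where
  "Fix C T = {x \<in> C. T x = x}"

definition enriched_strictly_pseudocontractive ::
  "real \<Rightarrow> real \<Rightarrow> 'a::real_inner set \<Rightarrow> ('a \<Rightarrow> 'a) \<Rightarrow> bool" where
  "enriched_strictly_pseudocontractive b k C T \<longleftrightarrow>
     b \<ge> 0 \<and> k < 1 \<and>
     (\<forall>x\<in>C. \<forall>y\<in>C.
        (norm (b *\<^sub>R (x - y) + T x - T y))\<^sup>2
          \<le> (b + 1)\<^sup>2 * (norm (x - y))\<^sup>2 + k * (norm (x - y - (T x - T y)))\<^sup>2)"

definition weakly_converges_to :: "(nat \<Rightarrow> 'a::real_inner) \<Rightarrow> 'a \<Rightarrow> bool" where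
  "weakly_converges_to x p \<longleftrightarrow> (\<forall>y. (\<lambda>n. inner (x n) y) \<longlonglongrightarrow> inner p y)"

end

theory Submission
  imports Defs
begin


definition bd :: "(nat \<Rightarrow> real) \<Rightarrow> bool" where
  "bd f \<longleftrightarrow> (\<exists>B. \<forall>n. \<bar>f n\<bar> \<le> B)"

definition LS :: "(nat \<Rightarrow> real) \<Rightarrow> real" where
  "LS f = Inf {c. eventually (\<lambda>n. f n \<le> c) sequentially}"

lemma LS_set:
  assumes "bd f"
  shows "{c. eventually (\<lambda>n. f n \<le> c) sequentially} \<noteq> {}"
    and "bdd_below {c. eventually (\<lambda>n. f n \<le> c) sequentially}"
proof -
  obtain B where B: "\<And>n. \<bar>f n\<bar> \<le> B" using assms unfolding bd_def by blast
  have "B \<in> {c. eventually (\<lambda>n. f n \<le> c) sequentially}"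
  proof -
    have "\<forall>n. f n \<le> B" using B abs_le_D1 by blast
    then show ?thesis by (simp add: always_eventually)
  qed
  then show "{c. eventually (\<lambda>n. f n \<le> c) sequentially} \<noteq> {}" by blast
  show "bdd_below {c. eventually (\<lambda>n. f n \<le> c) sequentially}"
  proof (rule bdd_belowI)
    fix c assume "c \<in> {c. eventually (\<lambda>n. f n \<le> c) sequentially}"
    then obtain N where "\<And>n. n \<ge> N \<Longrightarrow> f n \<le> c" by (auto simp: eventually_sequentially)
    then have "f N \<le> c" by simp
    moreover have "- B \<le> f N" using B[of N] by linarith
    ultimately show "- B \<le> c" by linarith
  qed
qed

lemma LS_le:
  assumes "bd f" "eventually (\<lambda>n. f n \<le> c) sequentially"
  shows "LS f \<le> c"
  unfolding LS_def using assms LS_set[OF assms(1)] by (intro cInf_lower) auto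

lemma LS_ev:
  assumes "bd f" "0 < e"
  shows "eventually (\<lambda>n. f n \<le> LS f + e) sequentially"
proof -
  have "Inf {c. eventually (\<lambda>n. f n \<le> c) sequentially} < LS f + e"
    using assms(2) unfolding LS_def by simp
  then obtain c where ev: "eventually (\<lambda>n. f n \<le> c) sequentially" and lt: "c < LS f + e"
    using cInf_less_iff[OF LS_set[OF assms(1)]] by blast
  show ?thesis using ev by (rule eventually_mono) (use lt in linarith)
qed

lemma LS_ge:
  assumes "bd f" "\<And>c. eventually (\<lambda>n. f n \<le> c) sequentially \<Longrightarrow> a \<le> c"
  shows "a \<le> LS f"
  unfolding LS_def using assms LS_set[OF assms(1)] by (intro cInf_greatest) auto

lemma bd_lin:
  assumes "bd f" "bd g"
  shows "bd (\<lambda>n. a * f n + b * g n + c)"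
proof -
  obtain B1 where B1: "\<And>n. \<bar>f n\<bar> \<le> B1" using assms unfolding bd_def by blast
  obtain B2 where B2: "\<And>n. \<bar>g n\<bar> \<le> B2" using assms unfolding bd_def by blast
  have "\<bar>a * f n + b * g n + c\<bar> \<le> \<bar>a\<bar> * B1 + \<bar>b\<bar> * B2 + \<bar>c\<bar>" for n
  proof -
    have "\<bar>a * f n\<bar> \<le> \<bar>a\<bar> * B1" unfolding abs_mult by (rule mult_left_mono[OF B1]) simp
    moreover have "\<bar>b * g n\<bar> \<le> \<bar>b\<bar> * B2" unfolding abs_mult by (rule mult_left_mono[OF B2]) simp
    ultimately show ?thesis by linarith
  qed
  then show ?thesis unfolding bd_def by blast
qed

lemma LS_lin_le:
  assumes "bd f" "bd g" "0 \<le> a" "0 \<le> b"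
  shows "LS (\<lambda>n. a * f n + b * g n + c) \<le> a * LS f + b * LS g + c"
proof (rule field_le_epsilon)
  fix e :: real assume e: "0 < e"
  define d where "d = e / (a + b + 1)"
  have ab: "0 < a + b + 1" using assms by linarith
  have d: "0 < d" unfolding d_def using e ab by (rule divide_pos_pos)
  have dd: "a * d + b * d \<le> e"
  proof -
    have "a * d + b * d = (a + b) * d" by (simp add: distrib_right)
    also have "\<dots> \<le> (a + b + 1) * d" using d by simp
    also have "\<dots> = e" unfolding d_def using ab by simp
    finally show ?thesis .
  qed
  have "eventually (\<lambda>n. f n \<le> LS f + d \<and> g n \<le> LS g + d) sequentially"
    using LS_ev[OF assms(1) d] LS_ev[OF assms(2) d] by (rule eventually_conj)
  then have "eventually (\<lambda>n. a * f n + b * g n + c \<le> a * LS f + b * LS g + c + e) sequentially"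
  proof (rule eventually_mono)
    fix n assume h: "f n \<le> LS f + d \<and> g n \<le> LS g + d"
    have "a * f n \<le> a * (LS f + d)" using h assms by (intro mult_left_mono) auto
    moreover have "b * g n \<le> b * (LS g + d)" using h assms by (intro mult_left_mono) auto
    ultimately show "a * f n + b * g n + c \<le> a * LS f + b * LS g + c + e"
      using dd unfolding distrib_left by linarith
  qed
  then show "LS (\<lambda>n. a * f n + b * g n + c) \<le> a * LS f + b * LS g + c + e"
    by (rule LS_le[OF bd_lin[OF assms(1,2)]])
qed

lemma LS_mono:
  assumes "bd f" "bd g" "eventually (\<lambda>n. f n \<le> g n) sequentially"
  shows "LS f \<le> LS g"
proof (rule LS_ge[OF assms(2)])
  fix c assume "eventually (\<lambda>n. g n \<le> c) sequentially"
  with assms(3) have "eventually (\<lambda>n. f n \<le> c) sequentially"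
    by eventually_elim auto
  then show "LS f \<le> c" by (rule LS_le[OF assms(1)])
qed

lemma LS_lim:
  assumes "bd f" "f \<longlonglongrightarrow> L"
  shows "LS f = L"
proof (rule antisym)
  show "LS f \<le> L"
  proof (rule field_le_epsilon)
    fix e :: real assume "0 < e"
    then have "eventually (\<lambda>n. dist (f n) L < e) sequentially"
      using assms(2) tendsto_iff by blast
    then have "eventually (\<lambda>n. f n \<le> L + e) sequentially"
      by (rule eventually_mono) (auto simp: dist_real_def)
    then show "LS f \<le> L + e" by (rule LS_le[OF assms(1)])
  qed
  show "L \<le> LS f"
  proof (rule LS_ge[OF assms(1)])
    fix c assume "eventually (\<lambda>n. f n \<le> c) sequentially"
    then show "L \<le> c" using assms(2) by (intro tendsto_upperbound) auto
  qed
qed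



lemma mid_identity:
  fixes a u v :: "'a::real_inner"
  shows "(norm (a - (1/2) *\<^sub>R (u + v)))\<^sup>2 =
    (1/2) * (norm (a - u))\<^sup>2 + (1/2) * (norm (a - v))\<^sup>2 + - (1/4) * (norm (u - v))\<^sup>2"
  by (simp add: power2_norm_eq_inner inner_diff_left inner_diff_right inner_add_left
      inner_add_right inner_commute algebra_simps)

lemma comb_identity:
  fixes a b :: "'a::real_inner"
  shows "(norm ((1 - s) *\<^sub>R a + s *\<^sub>R b))\<^sup>2 =
    (1 - s) * (norm a)\<^sup>2 + s * (norm b)\<^sup>2 - s * (1 - s) * (norm (a - b))\<^sup>2"
  by (simp add: power2_norm_eq_inner inner_diff_left inner_diff_right inner_add_left
      inner_add_right inner_commute algebra_simps)

lemma line_identity: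
  fixes a z y :: "'a::real_inner"
  shows "(norm (a - (z + t *\<^sub>R y)))\<^sup>2 =
    (norm (a - z))\<^sup>2 - 2 * t * (inner a y - inner z y) + t\<^sup>2 * (norm y)\<^sup>2"
  unfolding power2_norm_eq_inner by (simp add:  inner_diff_left inner_diff_right inner_add_left
      inner_add_right inner_commute algebra_simps power2_eq_square)

lemma norm_sq_diff_le:
  fixes a u v :: "'a::real_normed_vector"
  shows "(norm (a - u))\<^sup>2 \<le> (norm (a - v))\<^sup>2 + norm (u - v) * (2 * norm a + norm u + norm v)"
proof -
  define p where "p = norm (a - u)"
  define q where "q = norm (a - v)"
  define r where "r = norm (u - v)"
  have t: "p \<le> q + r" unfolding p_def q_def r_def
    using norm_triangle_ineq[of "a - v" "v - u"] by (simp add: norm_minus_commute)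
  have pq: "p + q \<le> 2 * norm a + norm u + norm v" unfolding p_def q_def
    using norm_triangle_ineq4[of a u] norm_triangle_ineq4[of a v] by linarith
  have "p\<^sup>2 \<le> q\<^sup>2 + r * (p + q)"
  proof (cases "p \<le> q")
    case True
    then have "p\<^sup>2 \<le> q\<^sup>2" unfolding p_def by (intro power_mono) auto
    moreover have "0 \<le> r * (p + q)" unfolding p_def q_def r_def by simp
    ultimately show ?thesis by linarith
  next
    case False
    have "p\<^sup>2 - q\<^sup>2 = (p - q) * (p + q)" by (simp add: power2_eq_square algebra_simps)
    also have "\<dots> \<le> r * (p + q)" using t False unfolding p_def q_def
      by (intro mult_right_mono) auto
    finally show ?thesis by linarith
  qed
  also have "\<dots> \<le> q\<^sup>2 + r * (2 * norm a + norm u + norm v)"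
    using pq unfolding r_def by (simp add: mult_left_mono)
  finally show ?thesis unfolding p_def q_def r_def .
qed



lemma min_exists:
  fixes \<phi> :: "'a::{real_inner,complete_space} \<Rightarrow> real"
  assumes C: "closed C" "convex C" "C \<noteq> {}"
    and lb: "\<And>c. c \<in> C \<Longrightarrow> 0 \<le> \<phi> c"
    and mid: "\<And>u v. u \<in> C \<Longrightarrow> v \<in> C \<Longrightarrow>
        \<phi> ((1/2) *\<^sub>R (u + v)) \<le> \<phi> u / 2 + \<phi> v / 2 - (norm (u - v))\<^sup>2 / 4"
    and lip: "\<And>u v. u \<in> C \<Longrightarrow> v \<in> C \<Longrightarrow> \<phi> u \<le> \<phi> v + K * norm (u - v)"
  shows "\<exists>z\<in>C. \<forall>c\<in>C. \<phi> z \<le> \<phi> c"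
proof -
  define m where "m = Inf (\<phi> ` C)"
  define w :: "nat \<Rightarrow> real" where "w n = 1 / (real n + 1)" for n
  have bdd: "bdd_below (\<phi> ` C)" using lb by (intro bdd_belowI[of _ 0]) auto
  have ne: "\<phi> ` C \<noteq> {}" using C by auto
  have mle: "m \<le> \<phi> c" if "c \<in> C" for c
    unfolding m_def using bdd that by (intro cInf_lower) auto
  have "\<exists>c\<in>C. \<phi> c < m + w n" for n
  proof -
    have "0 < w n" unfolding w_def by simp
    then have "Inf (\<phi> ` C) < m + w n" unfolding m_def by linarith
    then obtain y where "y \<in> \<phi> ` C" "y < m + w n"
      using cInf_less_iff[OF ne bdd] by blast
    then show ?thesis by blast
  qed
  then have "\<forall>n. \<exists>c. c \<in> C \<and> \<phi> c < m + w n" by blast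
  then obtain c where "\<forall>n. c n \<in> C \<and> \<phi> (c n) < m + w n"
    by (rule choice[THEN exE]) blast
  then have cC: "\<And>n. c n \<in> C" and cm: "\<And>n. \<phi> (c n) < m + w n" by auto
  have midC: "(1/2) *\<^sub>R (u + v) \<in> C" if "u \<in> C" "v \<in> C" for u v
  proof -
    have "(1/2) *\<^sub>R u + (1/2) *\<^sub>R v \<in> C"
      using C(2) that by (intro convexD) auto
    then show ?thesis by (simp add: scaleR_right_distrib)
  qed
  have close: "(norm (c i - c j))\<^sup>2 \<le> 2 * (w i) + 2 * (w j)" for i j
  proof -
    have "m \<le> \<phi> ((1/2) *\<^sub>R (c i + c j))" using mle midC cC by blast
    also have "\<dots> \<le> \<phi> (c i) / 2 + \<phi> (c j) / 2 - (norm (c i - c j))\<^sup>2 / 4"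
      using mid cC by blast
    finally show ?thesis using cm[of i] cm[of j] by linarith
  qed
  have "Cauchy c"
  proof (rule CauchyI)
    fix e :: real assume e: "0 < e"
    have e2: "0 < e\<^sup>2" using e by simp
    obtain M :: nat where M: "4 / e\<^sup>2 < real M" using reals_Archimedean2 by blast
    have M4: "4 < real M * e\<^sup>2" using pos_divide_less_eq[OF e2, THEN iffD1, OF M] .
    have "(real M + 1) * e\<^sup>2 = real M * e\<^sup>2 + e\<^sup>2" by (simp add: distrib_right)
    then have M4': "4 < (real M + 1) * e\<^sup>2" using M4 e2 by linarith
    have M1: "0 < real M + 1" by simp
    have M4'': "4 < e\<^sup>2 * (real M + 1)" using M4' by (simp only: mult.commute)
    have M5: "4 / (real M + 1) < e\<^sup>2" using pos_divide_less_eq[OF M1, THEN iffD2, OF M4'', simplified] .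
    define \<delta> where "\<delta> = 1 / (real M + 1)"
    have "4 * \<delta> = 4 / (real M + 1)" unfolding \<delta>_def by simp
    then have M6: "4 * \<delta> < e\<^sup>2" using M5 by linarith
    show "\<exists>M. \<forall>i\<ge>M. \<forall>j\<ge>M. norm (c i - c j) < e"
    proof (intro exI allI impI)
      fix i j assume ij: "M \<le> i" "M \<le> j"
      have i1: "w i \<le> \<delta>" unfolding \<delta>_def w_def using ij(1)
        by (intro divide_left_mono) auto
      have j1: "w j \<le> \<delta>" unfolding \<delta>_def w_def using ij(2)
        by (intro divide_left_mono) auto
      have sq: "(norm (c i - c j))\<^sup>2 < e\<^sup>2" using close[of i j] i1 j1 M6 by linarith
      show "norm (c i - c j) < e" by (rule power2_less_imp_less[OF sq]) (use e in linarith)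
    qed
  qed
  then obtain z where z: "c \<longlonglongrightarrow> z"
    using Cauchy_convergent_iff convergent_def by blast
  have zC: "z \<in> C" using closed_sequentially[OF C(1) cC z] .
  have w0: "(\<lambda>n. w n) \<longlonglongrightarrow> 0"
  proof -
    have "(\<lambda>n. w n) = (\<lambda>n. inverse (real (Suc n)))"
      unfolding w_def by (simp add: inverse_eq_divide add.commute)
    then show ?thesis using LIMSEQ_inverse_real_of_nat by simp
  qed
  have n0: "(\<lambda>n. norm (z - c n)) \<longlonglongrightarrow> 0"
  proof -
    have "(\<lambda>n. norm (c n - z)) \<longlonglongrightarrow> 0" using tendsto_norm_zero[OF LIM_zero[OF z]] .
    then show ?thesis by (simp add: norm_minus_commute)
  qed
  have lim: "(\<lambda>n. m + w n + K * norm (z - c n)) \<longlonglongrightarrow> m + 0 + K * 0"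
    by (rule tendsto_add[OF tendsto_add[OF tendsto_const w0] tendsto_mult[OF tendsto_const n0]])
  have "\<phi> z \<le> m"
  proof -
    have "\<phi> z \<le> m + w n + K * norm (z - c n)" for n
      using lip[OF zC cC[of n]] cm[of n] by linarith
    then have ev: "\<exists>N. \<forall>n\<ge>N. \<phi> z \<le> m + w n + K * norm (z - c n)" by blast
    have lim': "(\<lambda>n. m + w n + K * norm (z - c n)) \<longlonglongrightarrow> m"
      using lim by simp
    show ?thesis by (rule LIMSEQ_le_const[OF lim' ev])
  qed
  then show ?thesis using zC mle by force
qed

lemma min_unique:
  fixes \<phi> :: "'a::real_inner \<Rightarrow> real"
  assumes "convex C" "z1 \<in> C" "z2 \<in> C"
    and "\<And>c. c \<in> C \<Longrightarrow> \<phi> z1 \<le> \<phi> c" "\<And>c. c \<in> C \<Longrightarrow> \<phi> z2 \<le> \<phi> c"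
    and mid: "\<phi> ((1/2) *\<^sub>R (z1 + z2)) \<le> \<phi> z1 / 2 + \<phi> z2 / 2 - (norm (z1 - z2))\<^sup>2 / 4"
  shows "z1 = z2"
proof -
  have "(1/2) *\<^sub>R z1 + (1/2) *\<^sub>R z2 \<in> C" using assms by (intro convexD) auto
  then have "(1/2) *\<^sub>R (z1 + z2) \<in> C" by (simp add: scaleR_right_distrib)
  then have "\<phi> z1 \<le> \<phi> ((1/2) *\<^sub>R (z1 + z2))" "\<phi> z2 \<le> \<phi> ((1/2) *\<^sub>R (z1 + z2))"
    using assms by auto
  then have "(norm (z1 - z2))\<^sup>2 \<le> 0" using mid by linarith
  then show ?thesis by simp
qed



definition asym :: "(nat \<Rightarrow> 'a::real_inner) \<Rightarrow> 'a \<Rightarrow> real" where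
  "asym x w = LS (\<lambda>n. (norm (x n - w))\<^sup>2)"

lemma LS_le_plus:
  assumes "bd f" "bd g" "\<And>n. f n \<le> g n + c"
  shows "LS f \<le> LS g + c"
proof -
  have "LS f \<le> LS (\<lambda>n. 1 * g n + 0 * g n + c)"
    by (rule LS_mono[OF assms(1) bd_lin[OF assms(2) assms(2)]]) (simp add: assms(3))
  also have "\<dots> \<le> 1 * LS g + 0 * LS g + c"
    by (rule LS_lin_le[OF assms(2) assms(2)]) simp_all
  finally show ?thesis by simp
qed

lemma bd_norm:
  fixes x :: "nat \<Rightarrow> 'a::real_normed_vector"
  assumes "\<And>n. norm (x n) \<le> R"
  shows "bd (\<lambda>n. (norm (x n - w))\<^sup>2)"
proof -
  have "\<bar>(norm (x n - w))\<^sup>2\<bar> \<le> (R + norm w)\<^sup>2" for n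
  proof -
    have "norm (x n - w) \<le> R + norm w"
      using norm_triangle_ineq4[of "x n" w] assms[of n] by linarith
    then have "(norm (x n - w))\<^sup>2 \<le> (R + norm w)\<^sup>2" by (rule power_mono) simp
    then show ?thesis by simp
  qed
  then show ?thesis unfolding bd_def by blast
qed

lemma asym_nonneg:
  fixes x :: "nat \<Rightarrow> 'a::real_inner"
  assumes "\<And>n. norm (x n) \<le> R"
  shows "0 \<le> asym x w"
  unfolding asym_def
proof (rule LS_ge[OF bd_norm[OF assms]])
  fix c assume "eventually (\<lambda>n. (norm (x n - w))\<^sup>2 \<le> c) sequentially"
  then obtain N where "\<And>n. n \<ge> N \<Longrightarrow> (norm (x n - w))\<^sup>2 \<le> c"
    unfolding eventually_sequentially by blast
  then have "(norm (x N - w))\<^sup>2 \<le> c" by simp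
  moreover have "0 \<le> (norm (x N - w))\<^sup>2" by simp
  ultimately show "0 \<le> c" by linarith
qed

lemma asym_lim:
  fixes x :: "nat \<Rightarrow> 'a::real_inner"
  assumes "\<And>n. norm (x n) \<le> R" "(\<lambda>n. (norm (x n - w))\<^sup>2) \<longlonglongrightarrow> L"
  shows "asym x w = L"
  unfolding asym_def by (rule LS_lim[OF bd_norm[OF assms(1)] assms(2)])

lemma asym_mid:
  fixes x :: "nat \<Rightarrow> 'a::real_inner"
  assumes "\<And>n. norm (x n) \<le> R"
  shows "asym x ((1/2) *\<^sub>R (u + v)) \<le> asym x u / 2 + asym x v / 2 - (norm (u - v))\<^sup>2 / 4"
proof -
  have eq: "(\<lambda>n. (norm (x n - (1/2) *\<^sub>R (u + v)))\<^sup>2) =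
    (\<lambda>n. (1/2) * (norm (x n - u))\<^sup>2 + (1/2) * (norm (x n - v))\<^sup>2 + - (1/4) * (norm (u - v))\<^sup>2)"
    by (rule ext) (rule mid_identity)
  have "asym x ((1/2) *\<^sub>R (u + v)) \<le>
      (1/2) * asym x u + (1/2) * asym x v + - (1/4) * (norm (u - v))\<^sup>2"
    unfolding asym_def eq by (rule LS_lin_le[OF bd_norm[OF assms] bd_norm[OF assms]]) simp_all
  then show ?thesis by simp
qed

lemma asym_lip:
  fixes x :: "nat \<Rightarrow> 'a::real_inner"
  assumes "\<And>n. norm (x n) \<le> R" "norm u \<le> R" "norm v \<le> R"
  shows "asym x u \<le> asym x v + (4 * R) * norm (u - v)"
  unfolding asym_def
proof (rule LS_le_plus[OF bd_norm[OF assms(1)] bd_norm[OF assms(1)]])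
  fix n
  have "(norm (x n - u))\<^sup>2 \<le> (norm (x n - v))\<^sup>2 + norm (u - v) * (2 * norm (x n) + norm u + norm v)"
    by (rule norm_sq_diff_le)
  also have "norm (u - v) * (2 * norm (x n) + norm u + norm v) \<le> norm (u - v) * (4 * R)"
    using assms(1)[of n] assms(2,3) by (intro mult_left_mono) simp_all
  finally show "(norm (x n - u))\<^sup>2 \<le> (norm (x n - v))\<^sup>2 + 4 * R * norm (u - v)"
    by (simp add: mult.commute)
qed

lemma center_exists:
  fixes x :: "nat \<Rightarrow> 'a::{real_inner,complete_space}"
  assumes C: "closed C" "convex C" "C \<noteq> {}" and R: "\<And>c. c \<in> C \<Longrightarrow> norm c \<le> R"
    and x: "\<And>n. x n \<in> C"
  shows "\<exists>z\<in>C. \<forall>c\<in>C. asym x z \<le> asym x c"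
proof -
  have xR: "\<And>n. norm (x n) \<le> R" using R x by blast
  have a: "\<And>c. c \<in> C \<Longrightarrow> 0 \<le> asym x c" using asym_nonneg[OF xR] .
  have b: "\<And>u v. u \<in> C \<Longrightarrow> v \<in> C \<Longrightarrow>
        asym x ((1/2) *\<^sub>R (u + v)) \<le> asym x u / 2 + asym x v / 2 - (norm (u - v))\<^sup>2 / 4"
    using asym_mid[OF xR] .
  have c: "asym x u \<le> asym x v + (4 * R) * norm (u - v)" if "u \<in> C" "v \<in> C" for u v
    by (rule asym_lip[OF xR R[OF that(1)] R[OF that(2)]])
  show ?thesis
    by (rule min_exists[where \<phi>="asym x" and K="4 * R", OF C a b c])
qed

lemma center_unique:
  fixes x :: "nat \<Rightarrow> 'a::real_inner"
  assumes "convex C" "\<And>n. norm (x n) \<le> R" "za \<in> C" "zb \<in> C"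
    and "\<And>c. c \<in> C \<Longrightarrow> asym x za \<le> asym x c" "\<And>c. c \<in> C \<Longrightarrow> asym x zb \<le> asym x c"
  shows "za = zb"
proof -
  have m: "asym x ((1/2) *\<^sub>R (za + zb)) \<le> asym x za / 2 + asym x zb / 2 - (norm (za - zb))\<^sup>2 / 4"
    by (rule asym_mid[OF assms(2)])
  show ?thesis
    by (rule min_unique[where \<phi>="asym x" and C=C, OF assms(1) assms(3) assms(4) assms(5) assms(6) m])
qed

lemma center_fix:
  fixes x :: "nat \<Rightarrow> 'a::real_inner"
  assumes cv: "convex C" and R: "\<And>c. c \<in> C \<Longrightarrow> norm c \<le> R"
    and UC: "\<And>c. c \<in> C \<Longrightarrow> U c \<in> C"
    and ne: "\<And>u v. u \<in> C \<Longrightarrow> v \<in> C \<Longrightarrow> norm (U u - U v) \<le> norm (u - v)"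
    and x: "\<And>n. x n \<in> C" and e0: "(\<lambda>n. norm (x n - U (x n))) \<longlonglongrightarrow> 0"
    and z: "z \<in> C" and zmin: "\<And>c. c \<in> C \<Longrightarrow> asym x z \<le> asym x c"
  shows "U z = z"
proof -
  have xR: "\<And>n. norm (x n) \<le> R" using R x by blast
  define e where "e n = norm (x n - U (x n))" for n
  define h where "h n = e n * (e n + 4 * R)" for n
  have eR: "e n \<le> 2 * R" for n
  proof -
    have "e n \<le> norm (x n) + norm (U (x n))" unfolding e_def by (rule norm_triangle_ineq4)
    also have "\<dots> \<le> 2 * R" using R[OF x[of n]] R[OF UC[OF x[of n]]] by linarith
    finally show ?thesis .
  qed
  have e0': "e \<longlonglongrightarrow> 0" using e0 unfolding e_def by simp
  have h0: "h \<longlonglongrightarrow> 0 * (0 + 4 * R)" unfolding h_def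
    by (rule tendsto_mult[OF e0' tendsto_add[OF e0' tendsto_const]])
  have Rnn: "0 \<le> R" using R[OF x[of 0]] norm_ge_zero[of "x 0"] by linarith
  have bdh: "bd h" unfolding bd_def
  proof (intro exI allI)
    fix n
    have "0 \<le> e n" unfolding e_def by simp
    moreover have "e n \<le> 2 * R" by (rule eR)
    moreover note Rnn
    ultimately have h1: "h n \<le> (2 * R) * (2 * R + 4 * R)" unfolding h_def
      by (intro mult_mono) linarith+
    have h2: "0 \<le> h n" unfolding h_def using Rnn by (simp add: e_def)
    from h1 h2 show "\<bar>h n\<bar> \<le> (2 * R) * (2 * R + 4 * R)" by simp
  qed
  have pt: "(norm (x n - U z))\<^sup>2 \<le> (norm (x n - z))\<^sup>2 + h n" for n
  proof -
    have "norm (x n - U z) \<le> norm (x n - U (x n)) + norm (U (x n) - U z)"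
      using norm_triangle_ineq[of "x n - U (x n)" "U (x n) - U z"] by simp
    also have "\<dots> \<le> e n + norm (x n - z)" unfolding e_def using ne[OF x[of n] z] by linarith
    finally have a: "norm (x n - U z) \<le> e n + norm (x n - z)" .
    have s1: "(norm (x n - U z))\<^sup>2 \<le> (e n + norm (x n - z))\<^sup>2"
      by (rule power_mono[OF a]) simp
    have s2: "(e n + norm (x n - z))\<^sup>2 = (norm (x n - z))\<^sup>2 + e n * (e n + 2 * norm (x n - z))"
      by algebra
    have s3: "e n * (e n + 2 * norm (x n - z)) \<le> h n"
    proof -
      have "norm (x n - z) \<le> norm (x n) + norm z" by (rule norm_triangle_ineq4)
      also have "\<dots> \<le> 2 * R" using xR[of n] R[OF z] by linarith
      finally have "e n + 2 * norm (x n - z) \<le> e n + 4 * R" by linarith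
      then show ?thesis unfolding h_def by (rule mult_left_mono) (simp add: e_def)
    qed
    from s1 s2 s3 show ?thesis by linarith
  qed
  have "asym x (U z) \<le> asym x z + LS h"
  proof -
    have b1: "bd (\<lambda>n. (norm (x n - U z))\<^sup>2)" by (rule bd_norm[OF xR])
    have b2: "bd (\<lambda>n. (norm (x n - z))\<^sup>2)" by (rule bd_norm[OF xR])
    have "LS (\<lambda>n. (norm (x n - U z))\<^sup>2) \<le> LS (\<lambda>n. 1 * (norm (x n - z))\<^sup>2 + 1 * h n + 0)"
      by (rule LS_mono[OF b1 bd_lin[OF b2 bdh]]) (simp add: pt)
    also have "\<dots> \<le> 1 * LS (\<lambda>n. (norm (x n - z))\<^sup>2) + 1 * LS h + 0"
      by (rule LS_lin_le[OF b2 bdh]) simp_all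
    finally show ?thesis unfolding asym_def by simp
  qed
  moreover have "LS h = 0" using LS_lim[OF bdh h0] by simp
  ultimately have le: "asym x (U z) \<le> asym x z" by linarith
  have Uzmin: "asym x (U z) \<le> asym x c" if "c \<in> C" for c
    using order_trans[OF le zmin[OF that]] .
  show ?thesis
    using center_unique[where x=x and C=C and R=R and za="U z" and zb=z, OF cv xR UC[OF z] z Uzmin zmin] .
qed



lemma norm_diff_sq:
  fixes a b :: "'a::real_inner"
  shows "(norm (a - b))\<^sup>2 = (norm a)\<^sup>2 - 2 * inner a b + (norm b)\<^sup>2"
  by (simp add: power2_norm_eq_inner inner_diff_left inner_diff_right inner_commute)

lemma proj_exists:
  fixes w :: "'a::{real_inner,complete_space}"
  assumes C: "closed C" "convex C" "C \<noteq> {}" and R: "\<And>c. c \<in> C \<Longrightarrow> norm c \<le> R"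
  shows "\<exists>p\<in>C. \<forall>c\<in>C. norm (c - p) \<le> norm (c - w)"
proof -
  define \<phi> where "\<phi> c = (norm (w - c))\<^sup>2" for c
  have a: "\<And>c. c \<in> C \<Longrightarrow> 0 \<le> \<phi> c" unfolding \<phi>_def by simp
  have b: "\<phi> ((1/2) *\<^sub>R (u + v)) \<le> \<phi> u / 2 + \<phi> v / 2 - (norm (u - v))\<^sup>2 / 4" for u v
  proof -
    have "\<phi> ((1/2) *\<^sub>R (u + v)) =
      (1/2) * \<phi> u + (1/2) * \<phi> v + - (1/4) * (norm (u - v))\<^sup>2"
      unfolding \<phi>_def by (rule mid_identity)
    then show ?thesis by linarith
  qed
  have c: "\<phi> u \<le> \<phi> v + (2 * norm w + 2 * R) * norm (u - v)" if "u \<in> C" "v \<in> C" for u v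
  proof -
    have "\<phi> u \<le> \<phi> v + norm (u - v) * (2 * norm w + norm u + norm v)"
      unfolding \<phi>_def by (rule norm_sq_diff_le)
    also have "norm (u - v) * (2 * norm w + norm u + norm v) \<le> norm (u - v) * (2 * norm w + 2 * R)"
      using R[OF that(1)] R[OF that(2)] by (intro mult_left_mono) simp_all
    finally show ?thesis by (simp add: mult.commute)
  qed
  obtain p where pC: "p \<in> C" and pmin: "\<And>c. c \<in> C \<Longrightarrow> \<phi> p \<le> \<phi> c"
    using min_exists[where \<phi>=\<phi> and K="2 * norm w + 2 * R", OF C a b c] by blast
  have "norm (c - p) \<le> norm (c - w)" if cC: "c \<in> C" for c
  proof -
    define v where "v = c - p"
    define N where "N = (norm v)\<^sup>2"
    define I where "I = inner (w - p) v"
    have N0: "0 \<le> N" unfolding N_def by simp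
    have key: "2 * I \<le> s * N" if s: "0 < s" "s \<le> 1" for s
    proof -
      have "(1 - s) *\<^sub>R p + s *\<^sub>R c \<in> C" using C(2) pC cC s by (intro convexD) simp_all
      moreover have "(1 - s) *\<^sub>R p + s *\<^sub>R c = p + s *\<^sub>R v" unfolding v_def
        by (simp add: algebra_simps)
      ultimately have qC: "p + s *\<^sub>R v \<in> C" by simp
      have "\<phi> (p + s *\<^sub>R v) = (norm (w - p))\<^sup>2 - 2 * s * (inner w v - inner p v) + s\<^sup>2 * N"
        unfolding \<phi>_def N_def by (rule line_identity)
      moreover have "inner w v - inner p v = I" unfolding I_def by (simp add: inner_diff_left)
      moreover have "\<phi> p = (norm (w - p))\<^sup>2" unfolding \<phi>_def by simp
      moreover note pmin[OF qC]
      ultimately have "s * (2 * I) \<le> s * (s * N)" by (simp add: power2_eq_square algebra_simps)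
      then show ?thesis using s(1) by simp
    qed
    have I0: "I \<le> 0"
    proof (rule field_le_epsilon)
      fix e :: real assume e: "0 < e"
      define s where "s = min 1 (e / (N + 1))"
      have N1: "0 < N + 1" using N0 by linarith
      have s0: "0 < s" unfolding s_def using e N1 by simp
      have s1: "s \<le> 1" unfolding s_def by simp
      have s2: "s \<le> e / (N + 1)" unfolding s_def by simp
      have "s * N \<le> (e / (N + 1)) * N" using s2 N0 by (rule mult_right_mono)
      also have "\<dots> \<le> (e / (N + 1)) * (N + 1)" using e N1 by (intro mult_left_mono) simp_all
      also have "\<dots> = e" using N1 by simp
      finally have "s * N \<le> e" .
      then show "I \<le> 0 + e" using key[OF s0 s1] e by linarith
    qed
    have "c - w = v - (w - p)" unfolding v_def by simp
    then have e1: "(norm (c - w))\<^sup>2 = (norm (v - (w - p)))\<^sup>2" by (simp only:)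
    have "(norm (v - (w - p)))\<^sup>2 = N - 2 * I + (norm (w - p))\<^sup>2"
      unfolding N_def I_def using norm_diff_sq[of v "w - p"] inner_commute[of v "w - p"] by linarith
    with e1 have "(norm (c - w))\<^sup>2 = N - 2 * I + (norm (w - p))\<^sup>2" by simp
    then have "(norm (c - p))\<^sup>2 \<le> (norm (c - w))\<^sup>2" using I0 unfolding N_def v_def
      by (smt (verit) zero_le_power2)
    then show ?thesis by (rule power2_le_imp_le) simp
  qed
  then show ?thesis using pC by blast
qed

lemma center_global:
  fixes x :: "nat \<Rightarrow> 'a::{real_inner,complete_space}"
  assumes C: "closed C" "convex C" "C \<noteq> {}" and R: "\<And>c. c \<in> C \<Longrightarrow> norm c \<le> R"
    and x: "\<And>n. x n \<in> C" and z: "z \<in> C" and zmin: "\<And>c. c \<in> C \<Longrightarrow> asym x z \<le> asym x c"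
  shows "asym x z \<le> asym x w"
proof -
  have xR: "\<And>n. norm (x n) \<le> R" using R x by blast
  obtain p where pC: "p \<in> C" and pp: "\<And>c. c \<in> C \<Longrightarrow> norm (c - p) \<le> norm (c - w)"
    using proj_exists[OF C R, of w] by blast
  have "asym x p \<le> asym x w" unfolding asym_def
  proof (rule LS_mono[OF bd_norm[OF xR] bd_norm[OF xR]])
    show "eventually (\<lambda>n. (norm (x n - p))\<^sup>2 \<le> (norm (x n - w))\<^sup>2) sequentially"
    proof (rule always_eventually, rule allI)
      fix n show "(norm (x n - p))\<^sup>2 \<le> (norm (x n - w))\<^sup>2"
        by (rule power_mono[OF pp[OF x[of n]]]) simp
    qed
  qed
  then show ?thesis using zmin[OF pC] by linarith
qed



lemma km_C:
  assumes cv: "convex C" and UC: "\<And>c. c \<in> C \<Longrightarrow> U c \<in> C"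
    and x0: "x 0 \<in> C" and rec: "\<And>n. x (Suc n) = (1 - s n) *\<^sub>R x n + s n *\<^sub>R U (x n)"
    and s0: "\<And>n. 0 \<le> s n" and s1: "\<And>n. s n \<le> 1/2"
  shows "x n \<in> C"
proof (induction n)
  case 0 then show ?case by (rule x0)
next
  case (Suc n)
  have "(1 - s n) *\<^sub>R x n + s n *\<^sub>R U (x n) \<in> C"
  proof (rule convexD[OF cv Suc UC[OF Suc]])
    show "0 \<le> 1 - s n" using s1[of n] by linarith
    show "0 \<le> s n" by (rule s0)
    show "1 - s n + s n = 1" by simp
  qed
  then show ?case using rec[of n] by simp
qed

lemma km_fejer:
  fixes x :: "nat \<Rightarrow> 'a::real_inner"
  assumes ne: "\<And>u v. u \<in> C \<Longrightarrow> v \<in> C \<Longrightarrow> norm (U u - U v) \<le> norm (u - v)"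
    and xC: "x n \<in> C" and rec: "x (Suc n) = (1 - s) *\<^sub>R x n + s *\<^sub>R U (x n)"
    and s0: "0 \<le> s" and q: "q \<in> C" "U q = q"
  shows "(norm (x (Suc n) - q))\<^sup>2 \<le> (norm (x n - q))\<^sup>2 - s * (1 - s) * (norm (x n - U (x n)))\<^sup>2"
proof -
  have "x (Suc n) - q = (1 - s) *\<^sub>R (x n - q) + s *\<^sub>R (U (x n) - q)"
    unfolding rec by (simp add: algebra_simps)
  then have "(norm (x (Suc n) - q))\<^sup>2 =
      (1 - s) * (norm (x n - q))\<^sup>2 + s * (norm (U (x n) - q))\<^sup>2
      - s * (1 - s) * (norm ((x n - q) - (U (x n) - q)))\<^sup>2"
    using comb_identity[of s "x n - q" "U (x n) - q"] by simp
  moreover have "(x n - q) - (U (x n) - q) = x n - U (x n)" by simp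
  moreover have "(norm (U (x n) - q))\<^sup>2 \<le> (norm (x n - q))\<^sup>2"
  proof -
    have "norm (U (x n) - q) \<le> norm (x n - q)" using ne[OF xC q(1)] q(2) by simp
    then show ?thesis by (rule power_mono) simp
  qed
  then have "s * (norm (U (x n) - q))\<^sup>2 \<le> s * (norm (x n - q))\<^sup>2" using s0 by (rule mult_left_mono)
  ultimately show ?thesis by (simp add: algebra_simps)
qed

lemma km_dec:
  fixes x :: "nat \<Rightarrow> 'a::real_inner"
  assumes ne: "\<And>u v. u \<in> C \<Longrightarrow> v \<in> C \<Longrightarrow> norm (U u - U v) \<le> norm (u - v)"
    and xC: "x n \<in> C" "x (Suc n) \<in> C" and rec: "x (Suc n) = (1 - s) *\<^sub>R x n + s *\<^sub>R U (x n)"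
    and s0: "0 \<le> s" "s \<le> 1"
  shows "norm (x (Suc n) - U (x (Suc n))) \<le> norm (x n - U (x n))"
proof -
  have eq: "x (Suc n) - U (x (Suc n)) = (1 - s) *\<^sub>R (x n - U (x n)) + (U (x n) - U (x (Suc n)))"
    unfolding rec by (simp add: algebra_simps)
  have eq2: "x n - x (Suc n) = s *\<^sub>R (x n - U (x n))"
    unfolding rec by (simp add: algebra_simps)
  have "norm (x (Suc n) - U (x (Suc n))) \<le> norm ((1 - s) *\<^sub>R (x n - U (x n))) + norm (U (x n) - U (x (Suc n)))"
    unfolding eq by (rule norm_triangle_ineq)
  also have "norm ((1 - s) *\<^sub>R (x n - U (x n))) = (1 - s) * norm (x n - U (x n))"
    using s0 by simp
  also have "norm (U (x n) - U (x (Suc n))) \<le> norm (x n - x (Suc n))" by (rule ne[OF xC])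
  also have "norm (x n - x (Suc n)) = s * norm (x n - U (x n))" unfolding eq2 using s0 by simp
  finally show ?thesis by (simp add: algebra_simps)
qed

lemma km_e0:
  fixes x :: "nat \<Rightarrow> 'a::real_inner"
  assumes cv: "convex C" and UC: "\<And>c. c \<in> C \<Longrightarrow> U c \<in> C"
    and ne: "\<And>u v. u \<in> C \<Longrightarrow> v \<in> C \<Longrightarrow> norm (U u - U v) \<le> norm (u - v)"
    and x0: "x 0 \<in> C" and rec: "\<And>n. x (Suc n) = (1 - s n) *\<^sub>R x n + s n *\<^sub>R U (x n)"
    and s0: "\<And>n. 0 \<le> s n" and s1: "\<And>n. s n \<le> 1/2"
    and ns: "\<not> summable s"
    and p: "p \<in> C" "U p = p"
  shows "(\<lambda>n. norm (x n - U (x n))) \<longlonglongrightarrow> 0"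
proof -
  have xC: "\<And>n. x n \<in> C" using km_C[OF cv UC x0 rec s0 s1] .
  define e where "e n = norm (x n - U (x n))" for n
  have dec: "decseq e" unfolding e_def
  proof (rule decseq_SucI)
    fix n
    have sn: "s n \<le> 1" using s1[of n] by simp
    show "norm (x (Suc n) - U (x (Suc n))) \<le> norm (x n - U (x n))"
      by (rule km_dec[OF ne xC[of n] xC[of "Suc n"] rec[of n] s0[of n] sn])
  qed
  have enn: "\<forall>i. 0 \<le> e i" unfolding e_def by simp
  obtain L where L: "e \<longlonglongrightarrow> L" and Le: "\<forall>i. L \<le> e i"
    using decseq_convergent[OF dec enn] by blast
  have L0: "0 \<le> L" by (rule LIMSEQ_le_const[OF L]) (use enn in blast)
  have tele: "(\<Sum>i<N. s i * (1 - s i) * (e i)\<^sup>2) \<le> (norm (x 0 - p))\<^sup>2 - (norm (x N - p))\<^sup>2" for N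
  proof (induction N)
    case 0 then show ?case by simp
  next
    case (Suc N)
    have "(norm (x (Suc N) - p))\<^sup>2 \<le> (norm (x N - p))\<^sup>2 - s N * (1 - s N) * (e N)\<^sup>2"
      unfolding e_def by (rule km_fejer[OF ne xC[of N] rec[of N] s0[of N] p])
    then show ?case using Suc by simp
  qed
  show ?thesis
  proof (cases "L = 0")
    case True then show ?thesis using L unfolding e_def by simp
  next
    case False
    then have Lp: "0 < L" using L0 by simp
    have "summable s"
    proof (rule summableI_nonneg_bounded)
      show "\<And>n. 0 \<le> s n" by (rule s0)
      fix N
      have "(\<Sum>i<N. s i) * (L\<^sup>2 / 2) = (\<Sum>i<N. s i * (L\<^sup>2 / 2))" by (simp add: sum_distrib_right)
      also have "\<dots> \<le> (\<Sum>i<N. s i * (1 - s i) * (e i)\<^sup>2)"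
      proof (rule sum_mono)
        fix i
        have a: "L\<^sup>2 \<le> (e i)\<^sup>2" by (rule power_mono[OF spec[OF Le, of i] L0])
        have h: "1/2 \<le> 1 - s i" using s1[of i] by simp
        have b: "(1/2) * (e i)\<^sup>2 \<le> (1 - s i) * (e i)\<^sup>2" by (rule mult_right_mono[OF h]) simp
        from a b have "L\<^sup>2 / 2 \<le> (1 - s i) * (e i)\<^sup>2" by simp
        then have "s i * (L\<^sup>2 / 2) \<le> s i * ((1 - s i) * (e i)\<^sup>2)" using s0[of i] by (rule mult_left_mono)
        then show "s i * (L\<^sup>2 / 2) \<le> s i * (1 - s i) * (e i)\<^sup>2" by (simp add: mult.assoc)
      qed
      also have "\<dots> \<le> (norm (x 0 - p))\<^sup>2"
        using tele[of N] zero_le_power2[of "norm (x N - p)"] by linarith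
      finally have "(\<Sum>i<N. s i) * (L\<^sup>2 / 2) \<le> (norm (x 0 - p))\<^sup>2" .
      moreover have pos: "0 < L\<^sup>2 / 2" using Lp by simp
      ultimately show "(\<Sum>i<N. s i) \<le> (norm (x 0 - p))\<^sup>2 / (L\<^sup>2 / 2)"
        using pos_le_divide_eq[OF pos, THEN iffD2] by blast
    qed
    with ns show ?thesis by contradiction
  qed
qed



lemma subseq_conv_real:
  fixes g :: "nat \<Rightarrow> real"
  assumes bnd: "\<And>n. \<bar>g n\<bar> \<le> B"
    and sub: "\<And>r a. strict_mono r \<Longrightarrow> (g \<circ> r) \<longlonglongrightarrow> a \<Longrightarrow> a = c"
  shows "g \<longlonglongrightarrow> c"
proof (rule ccontr)
  assume nc: "\<not> g \<longlonglongrightarrow> c"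
  have "\<not> (\<forall>r>0. \<exists>no. \<forall>n\<ge>no. norm (g n - c) < r)" using nc unfolding LIMSEQ_iff .
  then have "\<exists>r>0. \<forall>no. \<exists>n\<ge>no. r \<le> \<bar>g n - c\<bar>" by (simp add: not_less)
  then obtain e where e: "0 < e" and fr: "\<And>N. \<exists>n\<ge>N. e \<le> \<bar>g n - c\<bar>" by blast
  define S where "S = {n. e \<le> \<bar>g n - c\<bar>}"
  have inf: "infinite S" unfolding infinite_nat_iff_unbounded_le
  proof
    fix m
    obtain n where n: "n \<ge> m" "e \<le> \<bar>g n - c\<bar>" using fr[of m] by blast
    have "n \<in> S" unfolding S_def using n(2) by simp
    with n(1) show "\<exists>n\<ge>m. n \<in> S" by blast
  qed
  obtain r :: "nat \<Rightarrow> nat" where rr: "strict_mono r \<and> (\<forall>n. r n \<in> S)"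
    using infinite_enumerate[OF inf] ..
  have r: "strict_mono r" using conjunct1[OF rr] .
  have rS: "r n \<in> S" for n using spec[OF conjunct2[OF rr], of n] .
  have "bounded (range (g \<circ> r))" unfolding bounded_iff
  proof (rule exI[of _ B], rule ballI)
    fix y assume "y \<in> range (g \<circ> r)"
    then obtain n where "y = g (r n)" by auto
    then show "norm y \<le> B" using bnd[of "r n"] by simp
  qed
  then obtain l r' where r': "strict_mono r'" and l: "((g \<circ> r) \<circ> r') \<longlonglongrightarrow> l"
    using bounded_imp_convergent_subsequence by blast
  have l': "(g \<circ> (r \<circ> r')) \<longlonglongrightarrow> l" using l by (simp add: o_assoc)
  have "l = c" by (rule sub[OF strict_mono_o[OF r r'] l'])
  moreover have "e \<le> \<bar>l - c\<bar>"
  proof (rule LIMSEQ_le_const)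
    show "(\<lambda>n. \<bar>(g \<circ> (r \<circ> r')) n - c\<bar>) \<longlonglongrightarrow> \<bar>l - c\<bar>"
      by (rule tendsto_rabs[OF tendsto_diff[OF l' tendsto_const]])
    have "e \<le> \<bar>(g \<circ> (r \<circ> r')) n - c\<bar>" for n
      using rS[of "r' n"] unfolding S_def by simp
    then show "\<exists>N. \<forall>n\<ge>N. e \<le> \<bar>(g \<circ> (r \<circ> r')) n - c\<bar>" by blast
  qed
  ultimately show False using e by simp
qed

lemma weak_conv:
  fixes x :: "nat \<Rightarrow> 'a::{real_inner,complete_space}"
  assumes C: "closed C" "convex C" "C \<noteq> {}" and R: "\<And>c. c \<in> C \<Longrightarrow> norm c \<le> R"
    and UC: "\<And>c. c \<in> C \<Longrightarrow> U c \<in> C"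
    and ne: "\<And>u v. u \<in> C \<Longrightarrow> v \<in> C \<Longrightarrow> norm (U u - U v) \<le> norm (u - v)"
    and x: "\<And>n. x n \<in> C" and e0: "(\<lambda>n. norm (x n - U (x n))) \<longlonglongrightarrow> 0"
    and fej: "\<And>q. q \<in> C \<Longrightarrow> U q = q \<Longrightarrow> convergent (\<lambda>n. norm (x n - q))"
  shows "\<exists>z\<in>C. U z = z \<and> weakly_converges_to x z"
proof -
  have xR: "\<And>n. norm (x n) \<le> R" using R x by blast
  obtain z where zC: "z \<in> C" and zmin: "\<And>c. c \<in> C \<Longrightarrow> asym x z \<le> asym x c"
    using center_exists[where x=x, OF C R x] by blast
  have Uz: "U z = z" by (rule center_fix[where x=x, OF C(2) R UC ne x e0 zC zmin])
  obtain d where d: "(\<lambda>n. norm (x n - z)) \<longlonglongrightarrow> d"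
    using fej[OF zC Uz] unfolding convergent_def by blast
  have d2: "(\<lambda>n. (norm (x n - z))\<^sup>2) \<longlonglongrightarrow> d\<^sup>2" by (rule tendsto_power[OF d])
  have "(\<lambda>n. inner (x n) y) \<longlonglongrightarrow> inner z y" for y
  proof (rule subseq_conv_real)
    show "\<bar>inner (x n) y\<bar> \<le> R * norm y" for n
      using Cauchy_Schwarz_ineq2[of "x n" y] xR[of n] by (smt (verit) mult_right_mono norm_ge_zero)
  next
    fix r a assume r: "strict_mono r" and a: "((\<lambda>n. inner (x n) y) \<circ> r) \<longlonglongrightarrow> a"
    define x' where "x' = x \<circ> r"
    have x'C: "\<And>n. x' n \<in> C" unfolding x'_def using x by simp
    have x'R: "\<And>n. norm (x' n) \<le> R" using R x'C by blast
    have e0': "(\<lambda>n. norm (x' n - U (x' n))) \<longlonglongrightarrow> 0"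
      using LIMSEQ_subseq_LIMSEQ[OF e0 r] unfolding x'_def by (simp add: o_def)
    obtain z' where z'C: "z' \<in> C" and z'min: "\<And>c. c \<in> C \<Longrightarrow> asym x' z' \<le> asym x' c"
      using center_exists[where x=x', OF C R x'C] by blast
    have Uz': "U z' = z'" by (rule center_fix[where x=x', OF C(2) R UC ne x'C e0' z'C z'min])
    obtain d' where d': "(\<lambda>n. norm (x n - z')) \<longlonglongrightarrow> d'"
      using fej[OF z'C Uz'] unfolding convergent_def by blast
    have d'2: "(\<lambda>n. (norm (x n - z'))\<^sup>2) \<longlonglongrightarrow> d'\<^sup>2" by (rule tendsto_power[OF d'])
    have sd2: "(\<lambda>n. (norm (x' n - z))\<^sup>2) \<longlonglongrightarrow> d\<^sup>2"
      using LIMSEQ_subseq_LIMSEQ[OF d2 r] unfolding x'_def by (simp add: o_def)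
    have sd'2: "(\<lambda>n. (norm (x' n - z'))\<^sup>2) \<longlonglongrightarrow> d'\<^sup>2"
      using LIMSEQ_subseq_LIMSEQ[OF d'2 r] unfolding x'_def by (simp add: o_def)
    have A1: "asym x z = d\<^sup>2" by (rule asym_lim[OF xR d2])
    have A2: "asym x z' = d'\<^sup>2" by (rule asym_lim[OF xR d'2])
    have A3: "asym x' z = d\<^sup>2" by (rule asym_lim[OF x'R sd2])
    have A4: "asym x' z' = d'\<^sup>2" by (rule asym_lim[OF x'R sd'2])
    have "d\<^sup>2 \<le> d'\<^sup>2" using zmin[OF z'C] A1 A2 by simp
    moreover have "d'\<^sup>2 \<le> d\<^sup>2" using z'min[OF zC] A3 A4 by simp
    ultimately have eqd: "d\<^sup>2 = d'\<^sup>2" by simp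
    have zmin': "asym x' z \<le> asym x' c" if "c \<in> C" for c
      using z'min[OF that] A3 A4 eqd by simp
    define Y where "Y = (norm y)\<^sup>2"
    define c where "c = a - inner z y"
    have key: "0 \<le> - 2 * t * c + t\<^sup>2 * Y" for t
    proof -
      have a': "(\<lambda>n. inner (x' n) y) \<longlonglongrightarrow> a" using a unfolding x'_def by (simp add: o_def)
      have "(\<lambda>n. (norm (x' n - z))\<^sup>2 - 2 * t * (inner (x' n) y - inner z y) + t\<^sup>2 * (norm y)\<^sup>2)
          \<longlonglongrightarrow> d\<^sup>2 - 2 * t * (a - inner z y) + t\<^sup>2 * (norm y)\<^sup>2"
        by (intro tendsto_add tendsto_diff tendsto_mult sd2 a' tendsto_const)
      then have "(\<lambda>n. (norm (x' n - (z + t *\<^sub>R y)))\<^sup>2) \<longlonglongrightarrow> d\<^sup>2 - 2 * t * (a - inner z y) + t\<^sup>2 * (norm y)\<^sup>2"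
        by (simp only: line_identity)
      then have "asym x' (z + t *\<^sub>R y) = d\<^sup>2 - 2 * t * c + t\<^sup>2 * Y"
        unfolding c_def Y_def by (rule asym_lim[OF x'R])
      moreover have "asym x' z \<le> asym x' (z + t *\<^sub>R y)"
        by (rule center_global[where x=x', OF C R x'C zC zmin'])
      ultimately show ?thesis using A3 by simp
    qed
    define t where "t = c / (Y + 1)"
    have Y0: "0 \<le> Y" unfolding Y_def by simp
    have ct: "c = t * (Y + 1)" unfolding t_def using Y0 by simp
    have "- 2 * t * c + t\<^sup>2 * Y = - (t\<^sup>2 * (Y + 2))"
      unfolding ct by (simp add: power2_eq_square algebra_simps)
    then have "t\<^sup>2 * (Y + 2) \<le> 0" using key[of t] by linarith
    moreover have "0 < Y + 2" using Y0 by simp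
    ultimately have "t\<^sup>2 \<le> 0" by (simp add: mult_le_0_iff)
    then have "t = 0" by simp
    then have "c = 0" using ct by simp
    then show "a = inner z y" unfolding c_def by simp
  qed
  then show ?thesis using zC Uz unfolding weakly_converges_to_def by blast
qed

lemma fix_exists:
  fixes U :: "'a::{real_inner,complete_space} \<Rightarrow> 'a"
  assumes C: "closed C" "convex C" "C \<noteq> {}" and R: "\<And>c. c \<in> C \<Longrightarrow> norm c \<le> R"
    and UC: "\<And>c. c \<in> C \<Longrightarrow> U c \<in> C"
    and ne: "\<And>u v. u \<in> C \<Longrightarrow> v \<in> C \<Longrightarrow> norm (U u - U v) \<le> norm (u - v)"
  shows "\<exists>z\<in>C. U z = z"
proof -
  obtain c0 where c0: "c0 \<in> C" using C(3) by blast
  have "\<exists>y\<in>C. (1 - 1 / (real n + 2)) *\<^sub>R U y + (1 / (real n + 2)) *\<^sub>R c0 = y" for n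
  proof -
    define a where "a = 1 / (real n + 2)"
    have a0: "0 < a" "a \<le> 1/2" unfolding a_def by (simp_all add: field_simps)
    have "\<exists>!y\<in>C. (1 - a) *\<^sub>R U y + a *\<^sub>R c0 = y"
    proof (rule Banach_fix[where c="1 - a"])
      show "complete C" using C(1) by (simp add: complete_eq_closed)
      show "C \<noteq> {}" by (rule C(3))
      show "0 \<le> 1 - a" "1 - a < 1" using a0 by simp_all
      show "(\<lambda>y. (1 - a) *\<^sub>R U y + a *\<^sub>R c0) ` C \<subseteq> C"
      proof
        fix w assume "w \<in> (\<lambda>y. (1 - a) *\<^sub>R U y + a *\<^sub>R c0) ` C"
        then obtain y where yC: "y \<in> C" and w: "w = (1 - a) *\<^sub>R U y + a *\<^sub>R c0" by blast
        have "(1 - a) *\<^sub>R U y + a *\<^sub>R c0 \<in> C"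
          using a0 by (intro convexD[OF C(2) UC[OF yC] c0]) simp_all
        then show "w \<in> C" using w by simp
      qed
      fix u v assume u: "u \<in> C" and v: "v \<in> C"
      have "dist ((1 - a) *\<^sub>R U u + a *\<^sub>R c0) ((1 - a) *\<^sub>R U v + a *\<^sub>R c0) = norm ((1 - a) *\<^sub>R (U u - U v))"
        by (simp add: dist_norm algebra_simps)
      also have "\<dots> = (1 - a) * norm (U u - U v)" using a0 by simp
      also have "\<dots> \<le> (1 - a) * norm (u - v)" using a0 ne[OF u v] by (intro mult_left_mono) simp_all
      finally show "dist ((1 - a) *\<^sub>R U u + a *\<^sub>R c0) ((1 - a) *\<^sub>R U v + a *\<^sub>R c0) \<le> (1 - a) * dist u v"
        by (simp add: dist_norm)
    qed
    then show ?thesis unfolding a_def by blast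
  qed
  then obtain y where yC: "\<And>n. y n \<in> C"
    and yfix: "\<And>n. (1 - 1 / (real n + 2)) *\<^sub>R U (y n) + (1 / (real n + 2)) *\<^sub>R c0 = y n"
    by metis
  have bnd: "norm (y n - U (y n)) \<le> (2 * R) * (1 / (real n + 2))" for n
  proof -
    define a where "a = 1 / (real n + 2)"
    have a0: "0 < a" unfolding a_def by simp
    have "y n - U (y n) = a *\<^sub>R (c0 - U (y n))"
    proof -
      have "y n = (1 - a) *\<^sub>R U (y n) + a *\<^sub>R c0" using yfix[of n] unfolding a_def by simp
      then have "y n - U (y n) = ((1 - a) *\<^sub>R U (y n) + a *\<^sub>R c0) - U (y n)" by simp
      also have "\<dots> = a *\<^sub>R (c0 - U (y n))" by (simp add: algebra_simps)
      finally show ?thesis .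
    qed
    then have "norm (y n - U (y n)) = a * norm (c0 - U (y n))" using a0 by simp
    also have "\<dots> \<le> a * (2 * R)"
    proof (rule mult_left_mono)
      show "norm (c0 - U (y n)) \<le> 2 * R"
        using norm_triangle_ineq4[of c0 "U (y n)"] R[OF c0] R[OF UC[OF yC[of n]]] by linarith
    qed (use a0 in simp)
    finally show ?thesis unfolding a_def by (simp add: mult.commute)
  qed
  have "(\<lambda>n. norm (y n - U (y n))) \<longlonglongrightarrow> 0"
  proof (rule Lim_null_comparison)
    show "eventually (\<lambda>n. norm (norm (y n - U (y n))) \<le> (2 * R) * (1 / (real n + 2))) sequentially"
      using bnd by simp
    have l2: "(\<lambda>n. 1 / (real n + 2)) \<longlonglongrightarrow> 0"
    proof -
      have "(\<lambda>n. 1 / (real n + 2)) = (\<lambda>n. inverse (real (Suc (Suc n))))"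
        by (simp add: inverse_eq_divide add.commute)
      moreover have "(\<lambda>n. inverse (real (Suc (Suc n)))) \<longlonglongrightarrow> 0"
        using LIMSEQ_Suc[OF LIMSEQ_inverse_real_of_nat] by simp
      ultimately show ?thesis by simp
    qed
    then show "(\<lambda>n. (2 * R) * (1 / (real n + 2))) \<longlonglongrightarrow> 0"
      using tendsto_mult[OF tendsto_const[of "2 * R"] l2] by simp
  qed
  moreover obtain z where zC: "z \<in> C" and zmin: "\<And>c. c \<in> C \<Longrightarrow> asym y z \<le> asym y c"
    using center_exists[where x=y, OF C R yC] by blast
  ultimately have "U z = z" using center_fix[where x=y, OF C(2) R UC ne yC _ zC zmin] by blast
  then show ?thesis using zC by blast
qed



lemma nonexp_U:
  fixes T :: "'a::real_inner \<Rightarrow> 'a"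
  assumes b: "0 \<le> b" and k: "k < 1"
    and ineq: "(norm (b *\<^sub>R (x - y) + T x - T y))\<^sup>2
          \<le> (b + 1)\<^sup>2 * (norm (x - y))\<^sup>2 + k * (norm (x - y - (T x - T y)))\<^sup>2"
    and mu: "\<mu> = (1 - k) / (b + 1)"
  shows "norm ((x - \<mu> *\<^sub>R (x - T x)) - (y - \<mu> *\<^sub>R (y - T y))) \<le> norm (x - y)"
proof -
  define u where "u = x - y"
  define w where "w = x - y - (T x - T y)"
  define B where "B = b + 1"
  define P where "P = inner u w"
  define Nu where "Nu = (norm u)\<^sup>2"
  define Nw where "Nw = (norm w)\<^sup>2"
  have B0: "0 < B" unfolding B_def using b by simp
  have e1: "b *\<^sub>R (x - y) + T x - T y = B *\<^sub>R u - w"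
    unfolding B_def u_def w_def by (simp add: algebra_simps)
  have x1: "(norm (B *\<^sub>R u - w))\<^sup>2 = (norm (B *\<^sub>R u))\<^sup>2 - 2 * inner (B *\<^sub>R u) w + (norm w)\<^sup>2"
    by (rule norm_diff_sq)
  have x2: "(norm (B *\<^sub>R u))\<^sup>2 = B\<^sup>2 * Nu" unfolding Nu_def using B0 by (simp add: power_mult_distrib)
  have x3: "inner (B *\<^sub>R u) w = B * P" unfolding P_def by simp
  have "(norm (B *\<^sub>R u - w))\<^sup>2 = B\<^sup>2 * Nu - 2 * B * P + Nw"
    using x1 x2 x3 unfolding Nw_def by simp
  then have hx: "(norm (B *\<^sub>R u - w))\<^sup>2 = B\<^sup>2 * Nu - 2 * B * P + Nw" .
  have i1: "(norm (b *\<^sub>R (x - y) + T x - T y))\<^sup>2 = (norm (B *\<^sub>R u - w))\<^sup>2" using e1 by simp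
  have i2: "(b + 1)\<^sup>2 * (norm (x - y))\<^sup>2 + k * (norm (x - y - (T x - T y)))\<^sup>2 = B\<^sup>2 * Nu + k * Nw"
    unfolding B_def Nu_def Nw_def u_def w_def by simp
  have h1: "B\<^sup>2 * Nu - 2 * B * P + Nw \<le> B\<^sup>2 * Nu + k * Nw"
    using ineq unfolding i1 i2 hx .
  have mB: "\<mu> * B = 1 - k" unfolding mu B_def using b by simp
  have m0: "0 \<le> \<mu>" unfolding mu using b k by simp
  have "B * (\<mu> * Nw - 2 * P) = (\<mu> * B) * Nw - 2 * B * P" by (simp add: algebra_simps)
  also have "\<dots> = (1 - k) * Nw - 2 * B * P" by (simp only: mB)
  also have "\<dots> \<le> 0" using h1 by (simp add: algebra_simps)
  finally have "B * (\<mu> * Nw - 2 * P) \<le> 0" .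
  then have h2: "\<mu> * Nw - 2 * P \<le> 0" using B0 by (simp add: mult_le_0_iff)
  have h3: "\<mu> * (\<mu> * Nw - 2 * P) \<le> 0" using m0 h2 by (simp add: mult_le_0_iff)
  have e2: "(x - \<mu> *\<^sub>R (x - T x)) - (y - \<mu> *\<^sub>R (y - T y)) = u - \<mu> *\<^sub>R w"
    unfolding u_def w_def by (simp add: algebra_simps)
  have y1: "(norm (u - \<mu> *\<^sub>R w))\<^sup>2 = (norm u)\<^sup>2 - 2 * inner u (\<mu> *\<^sub>R w) + (norm (\<mu> *\<^sub>R w))\<^sup>2"
    by (rule norm_diff_sq)
  have y2: "(norm (\<mu> *\<^sub>R w))\<^sup>2 = \<mu>\<^sup>2 * Nw" unfolding Nw_def by (simp add: power_mult_distrib)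
  have y3: "inner u (\<mu> *\<^sub>R w) = \<mu> * P" unfolding P_def by simp
  have "(norm (u - \<mu> *\<^sub>R w))\<^sup>2 = Nu - 2 * \<mu> * P + \<mu>\<^sup>2 * Nw"
    using y1 y2 y3 unfolding Nu_def by simp
  also have "\<dots> = Nu + \<mu> * (\<mu> * Nw - 2 * P)" by (simp add: power2_eq_square algebra_simps)
  also have "\<dots> \<le> Nu" using h3 by simp
  finally have "(norm (u - \<mu> *\<^sub>R w))\<^sup>2 \<le> (norm u)\<^sup>2" unfolding Nu_def .
  then have "norm (u - \<mu> *\<^sub>R w) \<le> norm u" by (rule power2_le_imp_le) simp
  then show ?thesis unfolding e2 u_def .
qed

theorem theorem5:
  fixes C :: "'a::{real_inner, complete_space} set"
    and T :: "'a \<Rightarrow> 'a" and b k :: real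
  assumes "bounded C" and "closed C" and "convex C" and "C \<noteq> {}"
    and "T ` C \<subseteq> C"
    and "0 \<le> k" and "k < 1"
    and "enriched_strictly_pseudocontractive b k C T"
  shows "Fix C T \<noteq> {} \<and>
    (\<exists>lam::real. 0 < lam \<and> lam < 1 \<and>
      (\<forall>(\<alpha>::nat \<Rightarrow> real) (x::nat \<Rightarrow> 'a).
         (\<forall>n. k < \<alpha> n \<and> \<alpha> n < 1)
         \<longrightarrow> \<not> summable (\<lambda>n. (\<alpha> n - k) * (1 - \<alpha> n))
         \<longrightarrow> x 0 \<in> C
         \<longrightarrow> (\<forall>n. x (Suc n) = (1 - lam * \<alpha> n) *\<^sub>R x n + (lam * \<alpha> n) *\<^sub>R T (x n))
         \<longrightarrow> (\<exists>p \<in> Fix C T. weakly_converges_to x p)))"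
proof -
  note bC = assms(1) and clC = assms(2) and cvC = assms(3) and neC = assms(4)
    and TC = assms(5) and k0 = assms(6) and k1 = assms(7)
  have b0: "0 \<le> b" and ineq: "\<And>x y. x \<in> C \<Longrightarrow> y \<in> C \<Longrightarrow>
        (norm (b *\<^sub>R (x - y) + T x - T y))\<^sup>2
          \<le> (b + 1)\<^sup>2 * (norm (x - y))\<^sup>2 + k * (norm (x - y - (T x - T y)))\<^sup>2"
    using assms(8) unfolding enriched_strictly_pseudocontractive_def by auto
  obtain R where R: "\<And>c. c \<in> C \<Longrightarrow> norm c \<le> R" using bC unfolding bounded_iff by blast
  define \<mu> where "\<mu> = (1 - k) / (b + 1)"
  define U where "U c = c - \<mu> *\<^sub>R (c - T c)" for c
  have mu0: "0 < \<mu>" unfolding \<mu>_def using b0 k1 by simp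
  have mu1: "\<mu> \<le> 1"
  proof -
    have "1 - k \<le> b + 1" using b0 k0 by linarith
    then show ?thesis unfolding \<mu>_def using b0 by simp
  qed
  have UC: "U c \<in> C" if "c \<in> C" for c
  proof -
    have "(1 - \<mu>) *\<^sub>R c + \<mu> *\<^sub>R T c \<in> C"
      using mu0 mu1 TC that by (intro convexD[OF cvC]) auto
    moreover have "(1 - \<mu>) *\<^sub>R c + \<mu> *\<^sub>R T c = U c" unfolding U_def by (simp add: algebra_simps)
    ultimately show ?thesis by simp
  qed
  have ne: "norm (U u - U v) \<le> norm (u - v)" if "u \<in> C" "v \<in> C" for u v
    unfolding U_def by (rule nonexp_U[OF b0 k1 ineq[OF that] \<mu>_def])
  have fixUT: "U c = c \<longleftrightarrow> T c = c" for c
  proof -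
    have "U c = c \<longleftrightarrow> \<mu> *\<^sub>R (c - T c) = 0" unfolding U_def by (rule diff_eq_eq[of c, THEN trans]) (auto simp del: scaleR_eq_0_iff)
    also have "\<dots> \<longleftrightarrow> c - T c = 0" using mu0 by simp
    also have "\<dots> \<longleftrightarrow> T c = c" by (simp add: eq_commute[of "T c" c])
    finally show ?thesis .
  qed
  obtain z where zC: "z \<in> C" and Uz: "U z = z"
    using fix_exists[where U=U, OF clC cvC neC R UC ne] by blast
  have zF: "z \<in> Fix C T" unfolding Fix_def using zC Uz fixUT by simp
  define lam where "lam = \<mu> / 2"
  have lam0: "0 < lam" "lam < 1" unfolding lam_def using mu0 mu1 by simp_all
  have main: "\<exists>p \<in> Fix C T. weakly_converges_to x p"
    if ha: "\<forall>n. k < \<alpha> n \<and> \<alpha> n < 1" and hs: "\<not> summable (\<lambda>n. (\<alpha> n - k) * (1 - \<alpha> n))"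
      and x0: "x 0 \<in> C"
      and rec0: "\<forall>n. x (Suc n) = (1 - lam * \<alpha> n) *\<^sub>R x n + (lam * \<alpha> n) *\<^sub>R T (x n)"
    for \<alpha> :: "nat \<Rightarrow> real" and x :: "nat \<Rightarrow> 'a"
  proof -
    define s where "s n = \<alpha> n / 2" for n
    have s0: "0 \<le> s n" for n unfolding s_def using spec[OF ha, of n] k0 by simp
    have s1: "s n \<le> 1/2" for n unfolding s_def using spec[OF ha, of n] by simp
    have rec: "x (Suc n) = (1 - s n) *\<^sub>R x n + s n *\<^sub>R U (x n)" for n
    proof -
      have l: "lam * \<alpha> n = s n * \<mu>" unfolding lam_def s_def by simp
      have "x (Suc n) = x n - (lam * \<alpha> n) *\<^sub>R (x n - T (x n))"
        using rec0 by (simp add: algebra_simps)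
      also have "\<dots> = (1 - s n) *\<^sub>R x n + s n *\<^sub>R U (x n)"
        unfolding l U_def by (simp add: algebra_simps)
      finally show ?thesis .
    qed
    have ns: "\<not> summable s"
    proof
      assume "summable s"
      then have "summable (\<lambda>n. 2 * s n)" by (rule summable_mult)
      then have sa: "summable \<alpha>" unfolding s_def by simp
      have "summable (\<lambda>n. (\<alpha> n - k) * (1 - \<alpha> n))"
      proof (rule summable_comparison_test[OF _ sa])
        show "\<exists>N. \<forall>n\<ge>N. norm ((\<alpha> n - k) * (1 - \<alpha> n)) \<le> \<alpha> n"
        proof (intro exI allI impI)
          fix n :: nat
          have a1: "k < \<alpha> n" "\<alpha> n < 1" using ha by auto
          have X0: "0 \<le> (\<alpha> n - k) * (1 - \<alpha> n)" using a1 by simp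
          have X1: "(\<alpha> n - k) * (1 - \<alpha> n) \<le> (\<alpha> n - k) * 1"
            using a1 k0 by (intro mult_left_mono) linarith+
          have X2: "norm ((\<alpha> n - k) * (1 - \<alpha> n)) = (\<alpha> n - k) * (1 - \<alpha> n)"
            using X0 by simp
          have X3: "(\<alpha> n - k) * (1 - \<alpha> n) \<le> \<alpha> n - k" using X1 by simp
          show "norm ((\<alpha> n - k) * (1 - \<alpha> n)) \<le> \<alpha> n" using X3 X2 k0 by linarith
        qed
      qed
      with hs show False by contradiction
    qed
    have xC: "\<And>n. x n \<in> C" using km_C[where U=U, OF cvC UC x0 rec s0 s1] .
    have e0: "(\<lambda>n. norm (x n - U (x n))) \<longlonglongrightarrow> 0"
      using km_e0[where U=U, OF cvC UC ne x0 rec s0 s1 ns zC Uz] .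
    have fej: "convergent (\<lambda>n. norm (x n - q))" if q: "q \<in> C" "U q = q" for q
    proof -
      have "decseq (\<lambda>n. norm (x n - q))"
      proof (rule decseq_SucI)
        fix n
        have "(norm (x (Suc n) - q))\<^sup>2 \<le> (norm (x n - q))\<^sup>2 - s n * (1 - s n) * (norm (x n - U (x n)))\<^sup>2"
          by (rule km_fejer[where U=U, OF ne xC[of n] rec[of n] s0[of n] q])
        moreover have "0 \<le> s n * (1 - s n) * (norm (x n - U (x n)))\<^sup>2"
          using s0[of n] s1[of n] by simp
        ultimately have "(norm (x (Suc n) - q))\<^sup>2 \<le> (norm (x n - q))\<^sup>2" by linarith
        then show "norm (x (Suc n) - q) \<le> norm (x n - q)" by (rule power2_le_imp_le) simp
      qed
      moreover have "\<forall>i. 0 \<le> norm (x i - q)" by simp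
      ultimately obtain L where "(\<lambda>n. norm (x n - q)) \<longlonglongrightarrow> L" using decseq_convergent by blast
      then show ?thesis unfolding convergent_def by blast
    qed
    obtain p where pC: "p \<in> C" and Up: "U p = p" and wc: "weakly_converges_to x p"
      using weak_conv[where U=U and x=x, OF clC cvC neC R UC ne xC e0 fej] by blast
    have "p \<in> Fix C T" unfolding Fix_def using pC Up fixUT by simp
    then show ?thesis using wc by blast
  qed
  show ?thesis
  proof (intro conjI)
    show "Fix C T \<noteq> {}" using zF by blast
    show "\<exists>lam::real. 0 < lam \<and> lam < 1 \<and>
      (\<forall>(\<alpha>::nat \<Rightarrow> real) (x::nat \<Rightarrow> 'a).
         (\<forall>n. k < \<alpha> n \<and> \<alpha> n < 1)
         \<longrightarrow> \<not> summable (\<lambda>n. (\<alpha> n - k) * (1 - \<alpha> n))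
         \<longrightarrow> x 0 \<in> C
         \<longrightarrow> (\<forall>n. x (Suc n) = (1 - lam * \<alpha> n) *\<^sub>R x n + (lam * \<alpha> n) *\<^sub>R T (x n))
         \<longrightarrow> (\<exists>p \<in> Fix C T. weakly_converges_to x p))"
      using lam0 main by blast
  qed
qed


end
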